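(* For every formula $\varphi$ of $\mathcal{L}(\Rightarrow)$, $\varphi$ is a theorem of the Yalcin logic if and only if $\varphi$ is a theorem of the logic defined in the same way as the Yalcin logic but with the axiom schemes A1–A4 in place of I1–I7, where A1: $(\varphi\Rightarrow\pi)\leftrightarrow\Box(\varphi\to\pi)$ for $\pi$ nonmodal; A2: $(\varphi\Rightarrow(\alpha\wedge\beta))\leftrightarrow((\varphi\Rightarrow\alpha)\wedge(\varphi\Rightarrow\beta))$; A3: $(\varphi\Rightarrow(\alpha\vee\Box\beta))\leftrightarrow((\varphi\Rightarrow\alpha)\vee(\varphi\Rightarrow\beta))$; A4: $(\varphi\Rightarrow(\alpha\vee\Diamond\beta))\leftrightarrow((\varphi\Rightarrow\alpha)\vee\neg(\varphi\Rightarrow\neg\beta))$.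
   Context: The language $\mathcal{L}(\Rightarrow)$ is given by $\varphi::= p\mid \neg\varphi\mid (\varphi\wedge\varphi)\mid \Box\varphi \mid (\varphi\Rightarrow\varphi)$, with $p$ ranging over a fixed set of propositional variables; $\vee,\to,\leftrightarrow,\bot$ as usual and $\Diamond\varphi:=\neg\Box\neg\varphi$. A formula is nonmodal if it contains neither $\Rightarrow$ nor $\Box$. The Yalcin logic is the smallest set of formulas of $\mathcal{L}(\Rightarrow)$ closed under replacement of equivalents (if $\alpha\leftrightarrow\beta$ is in the set and $\varphi'$ results from $\varphi$ by replacing an occurrence of $\alpha$ by $\beta$, then $\varphi\leftrightarrow\varphi'$ is in the set), modus ponens for $\to$, and necessitation for $\Box$, and containing all substitution instances of propositional tautologies and all instances of: K: $\Box(\varphi\to\psi)\to(\Box\varphi\to\Box\psi)$; 4: $\Diamond\Diamond\varphi\to\Diamond\varphi$; 5: $\Diamond\Box\varphi\to\Box\varphi$; I1: $(\varphi\Rightarrow\pi)\leftrightarrow\Box(\varphi\to\pi)$ for $\pi$ nonmodal; I2: $(\varphi\Rightarrow(\alpha\wedge\beta))\leftrightarrow((\varphi\Rightarrow\alpha)\wedge(\varphi\Rightarrow\beta))$; I3: $(\varphi\Rightarrow\alpha)\to(\varphi\Rightarrow(\alpha\vee\beta))$; I4: $(\varphi\Rightarrow\alpha)\to(\varphi\Rightarrow\Box\alpha)$; I5: $((\varphi\Rightarrow(\alpha\vee\Box\beta))\wedge\neg(\varphi\Rightarrow\beta))\to(\varphi\Rightarrow\alpha)$; I6: $((\varphi\Rightarrow(\alpha\vee\Diamond\beta))\wedge(\varphi\Rightarrow\neg\beta))\to(\varphi\Rightarrow\alpha)$;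 I7: $\neg(\varphi\Rightarrow\beta)\to(\varphi\Rightarrow\Diamond\neg\beta)$. The alternative logic has the same rules and the axioms tautologies, K, 4, 5, A1–A4. *)

theory Defs
  imports Main
begin

datatype 'p fm = Atom 'p | Neg "'p fm" | Conj "'p fm" "'p fm" | Box "'p fm"
  | Cond "'p fm" "'p fm"

definition Or :: "'p fm \<Rightarrow> 'p fm \<Rightarrow> 'p fm" where
  "Or a b = Neg (Conj (Neg a) (Neg b))"
definition Imp :: "'p fm \<Rightarrow> 'p fm \<Rightarrow> 'p fm" where
  "Imp a b = Neg (Conj a (Neg b))"
definition Iff :: "'p fm \<Rightarrow> 'p fm \<Rightarrow> 'p fm" where
  "Iff a b = Conj (Imp a b) (Imp b a)"
definition Dia :: "'p fm \<Rightarrow> 'p fm" where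
  "Dia a = Neg (Box (Neg a))"

fun nonmodal :: "'p fm \<Rightarrow> bool" where
  "nonmodal (Atom p) = True"
| "nonmodal (Neg a) = nonmodal a"
| "nonmodal (Conj a b) = (nonmodal a \<and> nonmodal b)"
| "nonmodal (Box a) = False"
| "nonmodal (Cond a b) = False"

fun peval :: "('q \<Rightarrow> bool) \<Rightarrow> 'q fm \<Rightarrow> bool" where
  "peval v (Atom p) = v p"
| "peval v (Neg a) = (\<not> peval v a)"
| "peval v (Conj a b) = (peval v a \<and> peval v b)"
| "peval v (Box a) = False"
| "peval v (Cond a b) = False"

fun subst :: "('q \<Rightarrow> 'p fm) \<Rightarrow> 'q fm \<Rightarrow> 'p fm" where
  "subst s (Atom p) = s p"
| "subst s (Neg a) = Neg (subst s a)"
| "subst s (Conj a b) = Conj (subst s a) (subst s b)"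
| "subst s (Box a) = Box (subst s a)"
| "subst s (Cond a b) = Cond (subst s a) (subst s b)"

definition taut :: "nat fm \<Rightarrow> bool" where
  "taut \<psi> \<longleftrightarrow> nonmodal \<psi> \<and> (\<forall>v. peval v \<psi>)"

definition taut_inst :: "'p fm \<Rightarrow> bool" where
  "taut_inst \<phi> \<longleftrightarrow> (\<exists>\<psi> s. taut \<psi> \<and> \<phi> = subst s \<psi>)"

inductive repl :: "'p fm \<Rightarrow> 'p fm \<Rightarrow> 'p fm \<Rightarrow> 'p fm \<Rightarrow> bool" for a b where
  here: "repl a b a b"
| neg: "repl a b f g \<Longrightarrow> repl a b (Neg f) (Neg g)"
| conjL: "repl a b f g \<Longrightarrow> repl a b (Conj f h) (Conj g h)"
| conjR: "repl a b f g \<Longrightarrow> repl a b (Conj h f) (Conj h g)"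
| box: "repl a b f g \<Longrightarrow> repl a b (Box f) (Box g)"
| condL: "repl a b f g \<Longrightarrow> repl a b (Cond f h) (Cond g h)"
| condR: "repl a b f g \<Longrightarrow> repl a b (Cond h f) (Cond h g)"

inductive thm_of :: "'p fm set \<Rightarrow> 'p fm \<Rightarrow> bool" for Ax where
  ax: "\<phi> \<in> Ax \<Longrightarrow> thm_of Ax \<phi>"
| taut: "taut_inst \<phi> \<Longrightarrow> thm_of Ax \<phi>"
| K: "thm_of Ax (Imp (Box (Imp \<phi> \<psi>)) (Imp (Box \<phi>) (Box \<psi>)))"
| four: "thm_of Ax (Imp (Dia (Dia \<phi>)) (Dia \<phi>))"
| five: "thm_of Ax (Imp (Dia (Box \<phi>)) (Box \<phi>))"
| mp: "thm_of Ax (Imp \<phi> \<psi>) \<Longrightarrow> thm_of Ax \<phi> \<Longrightarrow> thm_of Ax \<psi>"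
| nec: "thm_of Ax \<phi> \<Longrightarrow> thm_of Ax (Box \<phi>)"
| re: "thm_of Ax (Iff \<alpha> \<beta>) \<Longrightarrow> repl \<alpha> \<beta> \<phi> \<phi>' \<Longrightarrow> thm_of Ax (Iff \<phi> \<phi>')"

definition YalcinAx :: "'p fm set" where
  "YalcinAx =
     {Iff (Cond \<phi> \<pi>) (Box (Imp \<phi> \<pi>)) | \<phi> \<pi>. nonmodal \<pi>}
   \<union> {Iff (Cond \<phi> (Conj \<alpha> \<beta>)) (Conj (Cond \<phi> \<alpha>) (Cond \<phi> \<beta>)) | \<phi> \<alpha> \<beta>. True}
   \<union> {Imp (Cond \<phi> \<alpha>) (Cond \<phi> (Or \<alpha> \<beta>)) | \<phi> \<alpha> \<beta>. True}
   \<union> {Imp (Cond \<phi> \<alpha>) (Cond \<phi> (Box \<alpha>)) | \<phi> \<alpha>. True}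
   \<union> {Imp (Conj (Cond \<phi> (Or \<alpha> (Box \<beta>))) (Neg (Cond \<phi> \<beta>))) (Cond \<phi> \<alpha>) | \<phi> \<alpha> \<beta>. True}
   \<union> {Imp (Conj (Cond \<phi> (Or \<alpha> (Dia \<beta>))) (Cond \<phi> (Neg \<beta>))) (Cond \<phi> \<alpha>) | \<phi> \<alpha> \<beta>. True}
   \<union> {Imp (Neg (Cond \<phi> \<beta>)) (Cond \<phi> (Dia (Neg \<beta>))) | \<phi> \<beta>. True}"

definition AltAx :: "'p fm set" where
  "AltAx =
     {Iff (Cond \<phi> \<pi>) (Box (Imp \<phi> \<pi>)) | \<phi> \<pi>. nonmodal \<pi>}
   \<union> {Iff (Cond \<phi> (Conj \<alpha> \<beta>)) (Conj (Cond \<phi> \<alpha>) (Cond \<phi> \<beta>)) | \<phi> \<alpha> \<beta>. True}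
   \<union> {Iff (Cond \<phi> (Or \<alpha> (Box \<beta>))) (Or (Cond \<phi> \<alpha>) (Cond \<phi> \<beta>)) | \<phi> \<alpha> \<beta>. True}
   \<union> {Iff (Cond \<phi> (Or \<alpha> (Dia \<beta>))) (Or (Cond \<phi> \<alpha>) (Neg (Cond \<phi> (Neg \<beta>)))) | \<phi> \<alpha> \<beta>. True}"

end

theory Submission
  imports Defs
begin

lemma thm_mono:
  assumes "thm_of B \<phi>" and "\<forall>\<psi>\<in>B. thm_of A \<psi>"
  shows "thm_of A \<phi>"
  using assms by (induction rule: thm_of.induct) (auto intro: thm_of.intros)

lemma tautI: "nonmodal (\<psi>::nat fm) \<Longrightarrow> (\<forall>v. peval v \<psi>) \<Longrightarrow> thm_of Ax (subst s \<psi>)"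
  by (rule thm_of.taut) (auto simp: taut_inst_def taut_def)

lemmas D = Imp_def Iff_def Or_def Dia_def

lemma T1: "thm_of Ax (Imp (Iff a b) (Imp a b))"
proof -
  have "thm_of Ax (subst (\<lambda>n. [a,b] ! n) (Imp (Iff (Atom 0) (Atom 1)) (Imp (Atom 0) (Atom 1)) :: nat fm))" by (rule tautI) (auto simp: D)
  then show ?thesis by (simp add: D)
qed

lemma T2: "thm_of Ax (Imp (Iff a b) (Imp b a))"
proof -
  have "thm_of Ax (subst (\<lambda>n. [a,b] ! n) (Imp (Iff (Atom 0) (Atom 1)) (Imp (Atom 1) (Atom 0)) :: nat fm))" by (rule tautI) (auto simp: D)
  then show ?thesis by (simp add: D)
qed

lemma T3: "thm_of Ax (Imp (Imp a b) (Imp (Imp b c) (Imp a c)))"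
proof -
  have "thm_of Ax (subst (\<lambda>n. [a,b,c] ! n) (Imp (Imp (Atom 0) (Atom 1)) (Imp (Imp (Atom 1) (Atom 2)) (Imp (Atom 0) (Atom 2))) :: nat fm))" by (rule tautI) (auto simp: D)
  then show ?thesis by (simp add: D)
qed

lemma T5: "thm_of Ax (Imp (Imp (Conj x (Neg y)) z) (Imp (Imp z x) (Imp (Imp y x) (Iff x (Or z y)))))"
proof -
  have "thm_of Ax (subst (\<lambda>n. [x,y,z] ! n) (Imp (Imp (Conj (Atom 0) (Neg (Atom 1))) (Atom 2)) (Imp (Imp (Atom 2) (Atom 0)) (Imp (Imp (Atom 1) (Atom 0)) (Iff (Atom 0) (Or (Atom 2) (Atom 1))))) :: nat fm))" by (rule tautI) (auto simp: D)
  then show ?thesis by (simp add: D)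
qed

lemma T6: "thm_of Ax (Imp (Imp (Conj x w) z) (Imp (Imp z x) (Imp (Imp (Neg w) x) (Iff x (Or z (Neg w))))))"
proof -
  have "thm_of Ax (subst (\<lambda>n. [x,w,z] ! n) (Imp (Imp (Conj (Atom 0) (Atom 1)) (Atom 2)) (Imp (Imp (Atom 2) (Atom 0)) (Imp (Imp (Neg (Atom 1)) (Atom 0)) (Iff (Atom 0) (Or (Atom 2) (Neg (Atom 1)))))) :: nat fm))" by (rule tautI) (auto simp: D)
  then show ?thesis by (simp add: D)
qed

lemma T7: "thm_of Ax (Imp (Iff x (Or z y)) (Imp (Conj x (Neg y)) z))"
proof -
  have "thm_of Ax (subst (\<lambda>n. [x,y,z] ! n) (Imp (Iff (Atom 0) (Or (Atom 2) (Atom 1))) (Imp (Conj (Atom 0) (Neg (Atom 1))) (Atom 2)) :: nat fm))" by (rule tautI) (auto simp: D)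
  then show ?thesis by (simp add: D)
qed

lemma T8: "thm_of Ax (Imp (Iff x (Or z (Neg w))) (Imp (Conj x w) z))"
proof -
  have "thm_of Ax (subst (\<lambda>n. [x,w,z] ! n) (Imp (Iff (Atom 0) (Or (Atom 2) (Neg (Atom 1)))) (Imp (Conj (Atom 0) (Atom 1)) (Atom 2)) :: nat fm))" by (rule tautI) (auto simp: D)
  then show ?thesis by (simp add: D)
qed

lemma T9: "thm_of Ax (Imp (Iff a b) (Imp (Iff b (Conj a g)) (Imp a g)))"
proof -
  have "thm_of Ax (subst (\<lambda>n. [a,b,g] ! n) (Imp (Iff (Atom 0) (Atom 1)) (Imp (Iff (Atom 1) (Conj (Atom 0) (Atom 2))) (Imp (Atom 0) (Atom 2))) :: nat fm))" by (rule tautI) (auto simp: D)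
  then show ?thesis by (simp add: D)
qed

lemma T10: "thm_of Ax (Imp (Iff x (Or z y)) (Imp (Iff x w) (Imp y w)))"
proof -
  have "thm_of Ax (subst (\<lambda>n. [x,y,z,w] ! n) (Imp (Iff (Atom 0) (Or (Atom 2) (Atom 1))) (Imp (Iff (Atom 0) (Atom 3)) (Imp (Atom 1) (Atom 3))) :: nat fm))" by (rule tautI) (auto simp: D)
  then show ?thesis by (simp add: D)
qed

lemma T11: "thm_of Ax (Imp (Iff x (Or z (Neg u))) (Imp (Iff u v) (Imp (Iff x w) (Imp (Neg v) w))))"
proof -
  have "thm_of Ax (subst (\<lambda>n. [x,u,v,w,z] ! n) (Imp (Iff (Atom 0) (Or (Atom 4) (Neg (Atom 1)))) (Imp (Iff (Atom 1) (Atom 2)) (Imp (Iff (Atom 0) (Atom 3)) (Imp (Neg (Atom 2)) (Atom 3)))) :: nat fm))" by (rule tautI) (auto simp: D)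
  then show ?thesis by (simp add: D)
qed

lemma R1: "thm_of Ax (Iff (Conj (Neg a) (Neg b)) (Conj (Neg b) (Neg a)))"
proof -
  have "thm_of Ax (subst (\<lambda>n. [a,b] ! n) (Iff (Conj (Neg (Atom 0)) (Neg (Atom 1))) (Conj (Neg (Atom 1)) (Neg (Atom 0))) :: nat fm))" by (rule tautI) (auto simp: D)
  then show ?thesis by (simp add: D)
qed

lemma R2: "thm_of Ax (Iff (Neg (Neg (Neg b))) (Neg b))"
proof -
  have "thm_of Ax (subst (\<lambda>n. [b] ! n) (Iff (Neg (Neg (Neg (Atom 0)))) (Neg (Atom 0)) :: nat fm))" by (rule tautI) (auto simp: D)
  then show ?thesis by (simp add: D)
qed

lemma R3: "thm_of Ax (Iff (Neg (Neg b)) b)"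
proof -
  have "thm_of Ax (subst (\<lambda>n. [b] ! n) (Iff (Neg (Neg (Atom 0))) (Atom 0) :: nat fm))" by (rule tautI) (auto simp: D)
  then show ?thesis by (simp add: D)
qed

lemma R4: "thm_of Ax (Iff a (Conj a (Or a b)))"
proof -
  have "thm_of Ax (subst (\<lambda>n. [a,b] ! n) (Iff (Atom 0) (Conj (Atom 0) (Or (Atom 0) (Atom 1))) :: nat fm))" by (rule tautI) (auto simp: D)
  then show ?thesis by (simp add: D)
qed

lemma R5: "thm_of Ax (Iff (Or (Conj a (Neg a)) c) c)"
proof -
  have "thm_of Ax (subst (\<lambda>n. [a,c] ! n) (Iff (Or (Conj (Atom 0) (Neg (Atom 0))) (Atom 1)) (Atom 1) :: nat fm))" by (rule tautI) (auto simp: D)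
  then show ?thesis by (simp add: D)
qed


lemmas MP = thm_of.mp

lemma iffD1': "thm_of Ax (Iff a b) \<Longrightarrow> thm_of Ax (Imp a b)" by (rule MP[OF T1])
lemma iffD2': "thm_of Ax (Iff a b) \<Longrightarrow> thm_of Ax (Imp b a)" by (rule MP[OF T2])
lemma imp_trans: "thm_of Ax (Imp a b) \<Longrightarrow> thm_of Ax (Imp b c) \<Longrightarrow> thm_of Ax (Imp a c)"
  by (rule MP[OF MP[OF T3]])
lemma P5: "thm_of Ax (Imp (Conj x (Neg y)) z) \<Longrightarrow> thm_of Ax (Imp z x) \<Longrightarrow> thm_of Ax (Imp y x)
  \<Longrightarrow> thm_of Ax (Iff x (Or z y))"
  by (rule MP[OF MP[OF MP[OF T5]]])
lemma P6: "thm_of Ax (Imp (Conj x w) z) \<Longrightarrow> thm_of Ax (Imp z x) \<Longrightarrow> thm_of Ax (Imp (Neg w) x)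
  \<Longrightarrow> thm_of Ax (Iff x (Or z (Neg w)))"
  by (rule MP[OF MP[OF MP[OF T6]]])
lemma P7: "thm_of Ax (Iff x (Or z y)) \<Longrightarrow> thm_of Ax (Imp (Conj x (Neg y)) z)"
  by (rule MP[OF T7])
lemma P8: "thm_of Ax (Iff x (Or z (Neg w))) \<Longrightarrow> thm_of Ax (Imp (Conj x w) z)"
  by (rule MP[OF T8])
lemma P9: "thm_of Ax (Iff a b) \<Longrightarrow> thm_of Ax (Iff b (Conj a g)) \<Longrightarrow> thm_of Ax (Imp a g)"
  by (rule MP[OF MP[OF T9]])
lemma P10: "thm_of Ax (Iff x (Or z y)) \<Longrightarrow> thm_of Ax (Iff x w) \<Longrightarrow> thm_of Ax (Imp y w)"
  by (rule MP[OF MP[OF T10]])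
lemma P11: "thm_of Ax (Iff x (Or z (Neg u))) \<Longrightarrow> thm_of Ax (Iff u v) \<Longrightarrow> thm_of Ax (Iff x w)
  \<Longrightarrow> thm_of Ax (Imp (Neg v) w)"
  by (rule MP[OF MP[OF MP[OF T11]]])

lemma swapC: "thm_of Ax (Iff (Cond p (Or a b)) (Cond p (Or b a)))"
  unfolding Or_def by (rule thm_of.re[OF R1], rule repl.condR, rule repl.neg, rule repl.here)

lemma altA1: "nonmodal \<pi> \<Longrightarrow> thm_of AltAx (Iff (Cond \<phi> \<pi>) (Box (Imp \<phi> \<pi>)))"
  by (rule thm_of.ax) (unfold AltAx_def, blast)
lemma altA2: "thm_of AltAx (Iff (Cond \<phi> (Conj \<alpha> \<beta>)) (Conj (Cond \<phi> \<alpha>) (Cond \<phi> \<beta>)))"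
  by (rule thm_of.ax) (unfold AltAx_def, blast)
lemma altA3: "thm_of AltAx (Iff (Cond \<phi> (Or \<alpha> (Box \<beta>))) (Or (Cond \<phi> \<alpha>) (Cond \<phi> \<beta>)))"
  by (rule thm_of.ax) (unfold AltAx_def, blast)
lemma altA4: "thm_of AltAx (Iff (Cond \<phi> (Or \<alpha> (Dia \<beta>))) (Or (Cond \<phi> \<alpha>) (Neg (Cond \<phi> (Neg \<beta>)))))"
  by (rule thm_of.ax) (unfold AltAx_def, blast)

lemma altI3: "thm_of AltAx (Imp (Cond \<phi> \<alpha>) (Cond \<phi> (Or \<alpha> \<beta>)))"
  by (rule P9[OF thm_of.re[OF R4 repl.condR[OF repl.here]] altA2])

lemma altI4: "thm_of AltAx (Imp (Cond \<phi> \<alpha>) (Cond \<phi> (Box \<alpha>)))"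
  by (rule P10[OF altA3[where \<alpha>="Conj \<alpha> (Neg \<alpha>)"] thm_of.re[OF R5 repl.condR[OF repl.here]]])

lemma altI5: "thm_of AltAx (Imp (Conj (Cond \<phi> (Or \<alpha> (Box \<beta>))) (Neg (Cond \<phi> \<beta>))) (Cond \<phi> \<alpha>))"
  by (rule P7[OF altA3])

lemma altI6: "thm_of AltAx (Imp (Conj (Cond \<phi> (Or \<alpha> (Dia \<beta>))) (Cond \<phi> (Neg \<beta>))) (Cond \<phi> \<alpha>))"
  by (rule P8[OF altA4])

lemma altI7: "thm_of AltAx (Imp (Neg (Cond \<phi> \<beta>)) (Cond \<phi> (Dia (Neg \<beta>))))"
  by (rule P11[OF altA4[where \<alpha>="Conj \<beta> (Neg \<beta>)" and \<beta>="Neg \<beta>"]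
      thm_of.re[OF R3 repl.condR[OF repl.here]] thm_of.re[OF R5 repl.condR[OF repl.here]]])

lemma alt_Y: "\<forall>\<psi>\<in>YalcinAx. thm_of AltAx \<psi>"
  unfolding YalcinAx_def using altA1 altA2 altI3 altI4 altI5 altI6 altI7 by blast

lemma yI1: "nonmodal \<pi> \<Longrightarrow> thm_of YalcinAx (Iff (Cond \<phi> \<pi>) (Box (Imp \<phi> \<pi>)))"
  by (rule thm_of.ax) (unfold YalcinAx_def, blast)
lemma yI2: "thm_of YalcinAx (Iff (Cond \<phi> (Conj \<alpha> \<beta>)) (Conj (Cond \<phi> \<alpha>) (Cond \<phi> \<beta>)))"
  by (rule thm_of.ax) (unfold YalcinAx_def, blast)
lemma yI3: "thm_of YalcinAx (Imp (Cond \<phi> \<alpha>) (Cond \<phi> (Or \<alpha> \<beta>)))"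
  by (rule thm_of.ax) (unfold YalcinAx_def, blast)
lemma yI4: "thm_of YalcinAx (Imp (Cond \<phi> \<alpha>) (Cond \<phi> (Box \<alpha>)))"
  by (rule thm_of.ax) (unfold YalcinAx_def, blast)
lemma yI5: "thm_of YalcinAx (Imp (Conj (Cond \<phi> (Or \<alpha> (Box \<beta>))) (Neg (Cond \<phi> \<beta>))) (Cond \<phi> \<alpha>))"
  by (rule thm_of.ax) (unfold YalcinAx_def, blast)
lemma yI6: "thm_of YalcinAx (Imp (Conj (Cond \<phi> (Or \<alpha> (Dia \<beta>))) (Cond \<phi> (Neg \<beta>))) (Cond \<phi> \<alpha>))"
  by (rule thm_of.ax) (unfold YalcinAx_def, blast)
lemma yI7: "thm_of YalcinAx (Imp (Neg (Cond \<phi> \<beta>)) (Cond \<phi> (Dia (Neg \<beta>))))"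
  by (rule thm_of.ax) (unfold YalcinAx_def, blast)

lemma yA3: "thm_of YalcinAx (Iff (Cond \<phi> (Or \<alpha> (Box \<beta>))) (Or (Cond \<phi> \<alpha>) (Cond \<phi> \<beta>)))"
  by (rule P5[OF yI5 yI3 imp_trans[OF yI4 imp_trans[OF yI3 iffD1'[OF swapC]]]])

lemma dd: "thm_of Ax (Iff (Cond \<phi> (Dia (Neg (Neg \<beta>)))) (Cond \<phi> (Dia \<beta>)))"
  unfolding Dia_def by (rule thm_of.re[OF R2], rule repl.condR, rule repl.neg, rule repl.box, rule repl.here)

lemma yA4: "thm_of YalcinAx (Iff (Cond \<phi> (Or \<alpha> (Dia \<beta>))) (Or (Cond \<phi> \<alpha>) (Neg (Cond \<phi> (Neg \<beta>)))))"
  by (rule P6[OF yI6 yI3 imp_trans[OF yI7 imp_trans[OF iffD1'[OF dd] imp_trans[OF yI3 iffD1'[OF swapC]]]]])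

lemma y_Alt: "\<forall>\<psi>\<in>AltAx. thm_of YalcinAx \<psi>"
  unfolding AltAx_def using yI1 yI2 yA3 yA4 by blast

theorem lemma4:
  fixes \<phi> :: "'p fm"
  shows "thm_of YalcinAx \<phi> \<longleftrightarrow> thm_of AltAx \<phi>"
  using thm_mono alt_Y y_Alt by blast

end
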